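(* Let $(\mathbb{E},\dot I,\dot\otimes)$ with $L\dashv p$ be a weakly closed monoidal refinement of a symmetric monoidal closed category $(\mathbb{B},I,\otimes,\multimap)$, let $\mathcal{T}$ be a $\otimes$-strong monad on $\mathbb{B}$, and let $(M,\le,1,\cdot)$ be a preordered monoid. Then the preordered class $\mathbf{BLift}_{\dot\otimes}(\mathcal{T},M)$ of $M$-graded $\dot\otimes$-parameterized $!$-liftings of $\mathcal{T}$ (with the pointwise preorder) is equivalent, as a preorder, to the preordered class $\mathbf{Asign}_{\dot\otimes}(\mathcal{T},M)$ of $M$-graded $\dot\otimes$-parameterized assignments of $\mathbb{E}$ on $\mathcal{T}$ (with the pointwise preorder).
   Context: Let $(\mathbb{B},I,\otimes,\multimap)$ be a symmetric monoidal closed category with evaluation $ev_{X,Y}:(X\multimap Y)\otimes X\to Y$. A weakly closed monoidal refinement of $\mathbb{B}$ is a symmetric monoidal category $(\mathbb{E},\dot I,\dot\otimes)$ with an adjunction $L\dashv p$, $p:\mathbb{E}\to\mathbb{B}$, $L:\mathbb{B}\to\mathbb{E}$, such that: (a) $p$ is strict symmetric monoidal and faithful; (b) the unit of the adjunction is the identity; (c) for each $X\in\mathbb{B}$, $-\dot\otimes LX$ has a right adjoint $X\dot\pitchfork-$; (d) for each $X$, $(p,p)$ is a map of adjunctions from $(-\dot\otimes LX\dashv X\dot\pitchfork -)$ to $(-\otimes X\dashv X\multimap -)$ (i.e. $p\circ(-\dot\otimes LX)=(-\otimes X)\circ p$, $p\circ(X\dot\pitchfork-)=(X\multimap-)\circ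 p$, and $p$ sends unit to unit). Write $!=L\circ p$. For $X,Y\in\mathbb{E}$ and $f\in\mathbb{B}(pX,pY)$, write $f:X\dot\to Y$ if $f=p\dot f$ for some $\dot f\in\mathbb{E}(X,Y)$. $\mathcal{T}=(T,\eta,(-)^\dagger)$ is a monad (Kleisli triple) on $\mathbb{B}$ with strength $\sigma_{X,Y}:X\otimes TY\to T(X\otimes Y)$; for $f:X\otimes Y\to TZ$ let $f^\ddagger=f^\dagger\circ\sigma_{X,Y}$, and $\mathrm{kl}_{X,Y}=(ev_{X,TY})^\ddagger:(X\multimap TY)\otimes TX\to TY$. For $F:A\to|\mathbb{B}|$, $\mathbf{Ord}(p,F)$ is the class of $G:A\to|\mathbb{E}|$ with $pG(a)=F(a)$, preordered by $G\le G'$ iff $\mathrm{id}_{F(a)}:G(a)\dot\to G'(a)$ for all $a$. An $M$-graded $\dot\otimes$-parameterized $!$-lifting is a monotone $\dot T:(M,\le)\to\mathbf{Ord}(p,T\circ p)$ such that for all $\alpha,\beta\in M$, $X,Y,Z\in\mathbb{E}$ and $\mathbb{B}$-morphisms $f:pZ\otimes pX\to TpY$: if $f:Z\dot\otimes !X\dot\to\dot T\alpha Y$ then $f^\ddagger:Z\dot\otimes\dot T\beta X\dot\to\dot T(\beta\cdot\alpha)Y$. An $M$-graded $\dot\otimes$-parameterized assignment of $\mathbb{E}$ on $\mathcal{T}$ is a monotone $\Delta:(M,\le)\to\mathbf{Ord}(p,T)$ such that for all $\alpha,\beta\in M$ and $X,Y\in\mathbb{B}$, $\mathrm{kl}_{X,Y}:(X\dot\pitchfork\Delta\alpha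 Y)\dot\otimes\Delta\beta X\dot\to\Delta(\beta\cdot\alpha)Y$. *)

theory Defs
  imports Main
begin

section \<open>Categories with a monoidal structure (hom-set encoding)\<close>

text \<open>A category is given by its class of objects, hom-sets (pairwise disjoint,
empty outside the objects), composition (cmp g f = g after f) and identities.\<close>

record ('o,'m) mcat =
  Ob :: "'o set"
  Hom :: "'o \<Rightarrow> 'o \<Rightarrow> 'm set"
  cmp :: "'m \<Rightarrow> 'm \<Rightarrow> 'm"
  idt :: "'o \<Rightarrow> 'm"
  tunit :: "'o"
  tens :: "'o \<Rightarrow> 'o \<Rightarrow> 'o"
  tensm :: "'m \<Rightarrow> 'm \<Rightarrow> 'm"
  asc :: "'o \<Rightarrow> 'o \<Rightarrow> 'o \<Rightarrow> 'm"
  lu :: "'o \<Rightarrow> 'm"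
  ru :: "'o \<Rightarrow> 'm"
  sy :: "'o \<Rightarrow> 'o \<Rightarrow> 'm"

definition category :: "('o,'m) mcat \<Rightarrow> bool" where
  "category C \<longleftrightarrow>
    (\<forall>X Y. (X \<notin> Ob C \<or> Y \<notin> Ob C) \<longrightarrow> Hom C X Y = {}) \<and>
    (\<forall>X Y X' Y'. Hom C X Y \<inter> Hom C X' Y' \<noteq> {} \<longrightarrow> X = X' \<and> Y = Y') \<and>
    (\<forall>X\<in>Ob C. idt C X \<in> Hom C X X) \<and>
    (\<forall>X Y Z f g. f \<in> Hom C X Y \<longrightarrow> g \<in> Hom C Y Z \<longrightarrow> cmp C g f \<in> Hom C X Z) \<and>
    (\<forall>X Y f. f \<in> Hom C X Y \<longrightarrow> cmp C (idt C Y) f = f \<and> cmp C f (idt C X) = f) \<and>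
    (\<forall>W X Y Z f g h. f \<in> Hom C W X \<longrightarrow> g \<in> Hom C X Y \<longrightarrow> h \<in> Hom C Y Z \<longrightarrow>
        cmp C h (cmp C g f) = cmp C (cmp C h g) f)"

definition iso_in :: "('o,'m) mcat \<Rightarrow> 'm \<Rightarrow> 'o \<Rightarrow> 'o \<Rightarrow> bool" where
  "iso_in C f X Y \<longleftrightarrow> f \<in> Hom C X Y \<and>
     (\<exists>g\<in>Hom C Y X. cmp C g f = idt C X \<and> cmp C f g = idt C Y)"

definition monoidal :: "('o,'m) mcat \<Rightarrow> bool" where
  "monoidal C \<longleftrightarrow> category C \<and>
    tunit C \<in> Ob C \<and>
    (\<forall>X\<in>Ob C. \<forall>Y\<in>Ob C. tens C X Y \<in> Ob C) \<and>
    (\<forall>X X' Y Y' f g. f \<in> Hom C X X' \<longrightarrow> g \<in> Hom C Y Y' \<longrightarrow>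
        tensm C f g \<in> Hom C (tens C X Y) (tens C X' Y')) \<and>
    (\<forall>X\<in>Ob C. \<forall>Y\<in>Ob C. tensm C (idt C X) (idt C Y) = idt C (tens C X Y)) \<and>
    (\<forall>X X' X'' Y Y' Y'' f f' g g'. f \<in> Hom C X X' \<longrightarrow> f' \<in> Hom C X' X'' \<longrightarrow>
        g \<in> Hom C Y Y' \<longrightarrow> g' \<in> Hom C Y' Y'' \<longrightarrow>
        tensm C (cmp C f' f) (cmp C g' g) = cmp C (tensm C f' g') (tensm C f g)) \<and>
    (\<forall>X\<in>Ob C. \<forall>Y\<in>Ob C. \<forall>Z\<in>Ob C.
        iso_in C (asc C X Y Z) (tens C (tens C X Y) Z) (tens C X (tens C Y Z))) \<and>
    (\<forall>X X' Y Y' Z Z' f g h. f \<in> Hom C X X' \<longrightarrow> g \<in> Hom C Y Y' \<longrightarrow> h \<in> Hom C Z Z' \<longrightarrow>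
        cmp C (asc C X' Y' Z') (tensm C (tensm C f g) h)
          = cmp C (tensm C f (tensm C g h)) (asc C X Y Z)) \<and>
    (\<forall>X\<in>Ob C. iso_in C (lu C X) (tens C (tunit C) X) X) \<and>
    (\<forall>X X' f. f \<in> Hom C X X' \<longrightarrow>
        cmp C (lu C X') (tensm C (idt C (tunit C)) f) = cmp C f (lu C X)) \<and>
    (\<forall>X\<in>Ob C. iso_in C (ru C X) (tens C X (tunit C)) X) \<and>
    (\<forall>X X' f. f \<in> Hom C X X' \<longrightarrow>
        cmp C (ru C X') (tensm C f (idt C (tunit C))) = cmp C f (ru C X)) \<and>
    (\<forall>W\<in>Ob C. \<forall>X\<in>Ob C. \<forall>Y\<in>Ob C. \<forall>Z\<in>Ob C.
        cmp C (asc C W X (tens C Y Z)) (asc C (tens C W X) Y Z)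
          = cmp C (tensm C (idt C W) (asc C X Y Z))
              (cmp C (asc C W (tens C X Y) Z) (tensm C (asc C W X Y) (idt C Z)))) \<and>
    (\<forall>X\<in>Ob C. \<forall>Y\<in>Ob C.
        cmp C (tensm C (idt C X) (lu C Y)) (asc C X (tunit C) Y) = tensm C (ru C X) (idt C Y))"

definition symmetric_monoidal :: "('o,'m) mcat \<Rightarrow> bool" where
  "symmetric_monoidal C \<longleftrightarrow> monoidal C \<and>
    (\<forall>X\<in>Ob C. \<forall>Y\<in>Ob C. sy C X Y \<in> Hom C (tens C X Y) (tens C Y X)) \<and>
    (\<forall>X X' Y Y' f g. f \<in> Hom C X X' \<longrightarrow> g \<in> Hom C Y Y' \<longrightarrow>
        cmp C (sy C X' Y') (tensm C f g) = cmp C (tensm C g f) (sy C X Y)) \<and>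
    (\<forall>X\<in>Ob C. \<forall>Y\<in>Ob C. cmp C (sy C Y X) (sy C X Y) = idt C (tens C X Y)) \<and>
    (\<forall>X\<in>Ob C. \<forall>Y\<in>Ob C. \<forall>Z\<in>Ob C.
        cmp C (asc C Y Z X) (cmp C (sy C X (tens C Y Z)) (asc C X Y Z))
          = cmp C (tensm C (idt C Y) (sy C X Z))
              (cmp C (asc C Y X Z) (tensm C (sy C X Y) (idt C Z))))"

text \<open>Right adjoint \<open>ih\<close> of \<open>- \<otimes> K\<close>, presented by its counit \<open>ev\<close> and the
universal property.\<close>

definition is_right_adj ::
  "('o,'m) mcat \<Rightarrow> 'o \<Rightarrow> ('o \<Rightarrow> 'o) \<Rightarrow> ('o \<Rightarrow> 'm) \<Rightarrow> bool" where
  "is_right_adj C K ih ev \<longleftrightarrow>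
    (\<forall>A\<in>Ob C. ih A \<in> Ob C \<and> ev A \<in> Hom C (tens C (ih A) K) A \<and>
       (\<forall>Z\<in>Ob C. \<forall>f\<in>Hom C (tens C Z K) A.
          \<exists>!g. g \<in> Hom C Z (ih A) \<and> cmp C (ev A) (tensm C g (idt C K)) = f))"

definition radj_map ::
  "('o,'m) mcat \<Rightarrow> 'o \<Rightarrow> ('o \<Rightarrow> 'o) \<Rightarrow> ('o \<Rightarrow> 'm) \<Rightarrow> 'o \<Rightarrow> 'o \<Rightarrow> 'm \<Rightarrow> 'm" where
  "radj_map C K ih ev A A' h = (THE g. g \<in> Hom C (ih A) (ih A') \<and>
      cmp C (ev A') (tensm C g (idt C K)) = cmp C h (ev A))"

definition radj_unit ::
  "('o,'m) mcat \<Rightarrow> 'o \<Rightarrow> ('o \<Rightarrow> 'o) \<Rightarrow> ('o \<Rightarrow> 'm) \<Rightarrow> 'o \<Rightarrow> 'm" where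
  "radj_unit C K ih ev Z = (THE g. g \<in> Hom C Z (ih (tens C Z K)) \<and>
      cmp C (ev (tens C Z K)) (tensm C g (idt C K)) = idt C (tens C Z K))"

definition sym_monoidal_closed ::
  "('o,'m) mcat \<Rightarrow> ('o \<Rightarrow> 'o \<Rightarrow> 'o) \<Rightarrow> ('o \<Rightarrow> 'o \<Rightarrow> 'm) \<Rightarrow> bool" where
  "sym_monoidal_closed C ihom ev \<longleftrightarrow> symmetric_monoidal C \<and>
     (\<forall>X\<in>Ob C. is_right_adj C X (ihom X) (ev X))"

definition is_functor ::
  "('o,'m) mcat \<Rightarrow> ('p,'n) mcat \<Rightarrow> ('o \<Rightarrow> 'p) \<Rightarrow> ('m \<Rightarrow> 'n) \<Rightarrow> bool" where
  "is_functor C D Fo Fm \<longleftrightarrow>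
    (\<forall>X\<in>Ob C. Fo X \<in> Ob D) \<and>
    (\<forall>X Y f. f \<in> Hom C X Y \<longrightarrow> Fm f \<in> Hom D (Fo X) (Fo Y)) \<and>
    (\<forall>X\<in>Ob C. Fm (idt C X) = idt D (Fo X)) \<and>
    (\<forall>X Y Z f g. f \<in> Hom C X Y \<longrightarrow> g \<in> Hom C Y Z \<longrightarrow> Fm (cmp C g f) = cmp D (Fm g) (Fm f))"

definition faithful ::
  "('o,'m) mcat \<Rightarrow> ('m \<Rightarrow> 'n) \<Rightarrow> bool" where
  "faithful C Fm \<longleftrightarrow> (\<forall>X Y. inj_on Fm (Hom C X Y))"

definition strict_sym_monoidal_functor ::
  "('o,'m) mcat \<Rightarrow> ('p,'n) mcat \<Rightarrow> ('o \<Rightarrow> 'p) \<Rightarrow> ('m \<Rightarrow> 'n) \<Rightarrow> bool" where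
  "strict_sym_monoidal_functor C D Fo Fm \<longleftrightarrow> is_functor C D Fo Fm \<and>
    Fo (tunit C) = tunit D \<and>
    (\<forall>X\<in>Ob C. \<forall>Y\<in>Ob C. Fo (tens C X Y) = tens D (Fo X) (Fo Y)) \<and>
    (\<forall>X X' Y Y' f g. f \<in> Hom C X X' \<longrightarrow> g \<in> Hom C Y Y' \<longrightarrow>
        Fm (tensm C f g) = tensm D (Fm f) (Fm g)) \<and>
    (\<forall>X\<in>Ob C. \<forall>Y\<in>Ob C. \<forall>Z\<in>Ob C. Fm (asc C X Y Z) = asc D (Fo X) (Fo Y) (Fo Z)) \<and>
    (\<forall>X\<in>Ob C. Fm (lu C X) = lu D (Fo X)) \<and>
    (\<forall>X\<in>Ob C. Fm (ru C X) = ru D (Fo X)) \<and>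
    (\<forall>X\<in>Ob C. \<forall>Y\<in>Ob C. Fm (sy C X Y) = sy D (Fo X) (Fo Y))"

text \<open>\<open>B\<close> symmetric monoidal closed (internal hom \<open>ihom\<close>, evaluation \<open>ev\<close>);
\<open>E\<close> symmetric monoidal; \<open>p = (po,pm)\<close>, \<open>L = (Lo,Lm)\<close> with \<open>L \<turnstile> p\<close> with identity unit;
\<open>pitch X\<close> is the right adjoint of \<open>- \<otimes> L X\<close> with counit \<open>evE X\<close>.\<close>

definition wc_refinement ::
  "('bo,'bm) mcat \<Rightarrow> ('bo \<Rightarrow> 'bo \<Rightarrow> 'bo) \<Rightarrow> ('bo \<Rightarrow> 'bo \<Rightarrow> 'bm) \<Rightarrow>
   ('eo,'em) mcat \<Rightarrow> ('eo \<Rightarrow> 'bo) \<Rightarrow> ('em \<Rightarrow> 'bm) \<Rightarrow> ('bo \<Rightarrow> 'eo) \<Rightarrow> ('bm \<Rightarrow> 'em) \<Rightarrow>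
   ('bo \<Rightarrow> 'eo \<Rightarrow> 'eo) \<Rightarrow> ('bo \<Rightarrow> 'eo \<Rightarrow> 'em) \<Rightarrow> bool" where
  "wc_refinement B ihom ev E po pm Lo Lm pitch evE \<longleftrightarrow>
    sym_monoidal_closed B ihom ev \<and> symmetric_monoidal E \<and>
    \<comment> \<open>(a)\<close>
    strict_sym_monoidal_functor E B po pm \<and> faithful E pm \<and>
    \<comment> \<open>the adjunction \<open>L \<turnstile> p\<close> with identity unit\<close>
    is_functor B E Lo Lm \<and>
    (\<forall>X\<in>Ob B. po (Lo X) = X) \<and>
    (\<forall>X Y f. f \<in> Hom B X Y \<longrightarrow> pm (Lm f) = f) \<and>
    (\<forall>X\<in>Ob B. \<forall>A\<in>Ob E. \<forall>f\<in>Hom B X (po A). \<exists>!g. g \<in> Hom E (Lo X) A \<and> pm g = f) \<and>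
    \<comment> \<open>(c)\<close>
    (\<forall>X\<in>Ob B. is_right_adj E (Lo X) (pitch X) (evE X)) \<and>
    \<comment> \<open>(d)\<close>
    (\<forall>X\<in>Ob B. \<forall>Z\<in>Ob E. po (tens E Z (Lo X)) = tens B (po Z) X) \<and>
    (\<forall>X\<in>Ob B. \<forall>Z Z' h. h \<in> Hom E Z Z' \<longrightarrow>
        pm (tensm E h (idt E (Lo X))) = tensm B (pm h) (idt B X)) \<and>
    (\<forall>X\<in>Ob B. \<forall>A\<in>Ob E. po (pitch X A) = ihom X (po A)) \<and>
    (\<forall>X\<in>Ob B. \<forall>A A' h. h \<in> Hom E A A' \<longrightarrow>
        pm (radj_map E (Lo X) (pitch X) (evE X) A A' h)
          = radj_map B X (ihom X) (ev X) (po A) (po A') (pm h)) \<and>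
    (\<forall>X\<in>Ob B. \<forall>Z\<in>Ob E.
        pm (radj_unit E (Lo X) (pitch X) (evE X) Z) = radj_unit B X (ihom X) (ev X) (po Z))"

section \<open>Strong monads (Kleisli triples with strength)\<close>

definition strong_monad ::
  "('bo,'bm) mcat \<Rightarrow> ('bo \<Rightarrow> 'bo) \<Rightarrow> ('bo \<Rightarrow> 'bm) \<Rightarrow> ('bm \<Rightarrow> 'bm) \<Rightarrow>
   ('bo \<Rightarrow> 'bo \<Rightarrow> 'bm) \<Rightarrow> bool" where
  "strong_monad B T eta kext sigma \<longleftrightarrow>
    (\<forall>X\<in>Ob B. T X \<in> Ob B \<and> eta X \<in> Hom B X (T X)) \<and>
    (\<forall>X Y f. f \<in> Hom B X (T Y) \<longrightarrow> kext f \<in> Hom B (T X) (T Y)) \<and>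
    (\<forall>X\<in>Ob B. kext (eta X) = idt B (T X)) \<and>
    (\<forall>X Y f. f \<in> Hom B X (T Y) \<longrightarrow> cmp B (kext f) (eta X) = f) \<and>
    (\<forall>X Y Z f g. f \<in> Hom B X (T Y) \<longrightarrow> g \<in> Hom B Y (T Z) \<longrightarrow>
        cmp B (kext g) (kext f) = kext (cmp B (kext g) f)) \<and>
    \<comment> \<open>strength\<close>
    (\<forall>X\<in>Ob B. \<forall>Y\<in>Ob B. sigma X Y \<in> Hom B (tens B X (T Y)) (T (tens B X Y))) \<and>
    (\<forall>X X' Y g. g \<in> Hom B X X' \<longrightarrow> Y \<in> Ob B \<longrightarrow>
        cmp B (sigma X' Y) (tensm B g (idt B (T Y)))
          = cmp B (kext (cmp B (eta (tens B X' Y)) (tensm B g (idt B Y)))) (sigma X Y)) \<and>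
    (\<forall>X\<in>Ob B. cmp B (kext (cmp B (eta X) (lu B X))) (sigma (tunit B) X) = lu B (T X)) \<and>
    (\<forall>X\<in>Ob B. \<forall>Y\<in>Ob B. \<forall>Z\<in>Ob B.
        cmp B (kext (cmp B (eta (tens B X (tens B Y Z))) (asc B X Y Z))) (sigma (tens B X Y) Z)
          = cmp B (sigma X (tens B Y Z)) (cmp B (tensm B (idt B X) (sigma Y Z)) (asc B X Y (T Z)))) \<and>
    (\<forall>X\<in>Ob B. \<forall>Y\<in>Ob B. cmp B (sigma X Y) (tensm B (idt B X) (eta Y)) = eta (tens B X Y)) \<and>
    (\<forall>X\<in>Ob B. \<forall>Y Z f. f \<in> Hom B Y (T Z) \<longrightarrow>
        cmp B (sigma X Z) (tensm B (idt B X) (kext f))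
          = cmp B (kext (cmp B (sigma X Z) (tensm B (idt B X) f))) (sigma X Y))"

definition kl ::
  "('bo,'bm) mcat \<Rightarrow> ('bo \<Rightarrow> 'bo \<Rightarrow> 'bo) \<Rightarrow> ('bo \<Rightarrow> 'bo \<Rightarrow> 'bm) \<Rightarrow> ('bo \<Rightarrow> 'bo) \<Rightarrow>
   ('bm \<Rightarrow> 'bm) \<Rightarrow> ('bo \<Rightarrow> 'bo \<Rightarrow> 'bm) \<Rightarrow> 'bo \<Rightarrow> 'bo \<Rightarrow> 'bm" where
  "kl B ihom ev T kext sigma X Y = cmp B (kext (ev X (T Y))) (sigma (ihom X (T Y)) X)"

definition preordered_monoid :: "('g \<Rightarrow> 'g \<Rightarrow> bool) \<Rightarrow> 'g \<Rightarrow> ('g \<Rightarrow> 'g \<Rightarrow> 'g) \<Rightarrow> bool" where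
  "preordered_monoid le one mult \<longleftrightarrow>
    (\<forall>a. le a a) \<and> (\<forall>a b c. le a b \<longrightarrow> le b c \<longrightarrow> le a c) \<and>
    (\<forall>a b c. mult (mult a b) c = mult a (mult b c)) \<and>
    (\<forall>a. mult one a = a \<and> mult a one = a) \<and>
    (\<forall>a a' b b'. le a a' \<longrightarrow> le b b' \<longrightarrow> le (mult a b) (mult a' b'))"

definition lifts :: "('eo,'em) mcat \<Rightarrow> ('em \<Rightarrow> 'bm) \<Rightarrow> 'eo \<Rightarrow> 'eo \<Rightarrow> 'bm \<Rightarrow> bool" where
  "lifts E pm X Y f \<longleftrightarrow> (\<exists>g\<in>Hom E X Y. pm g = f)"

definition ord_mem :: "('eo,'em) mcat \<Rightarrow> ('eo \<Rightarrow> 'bo) \<Rightarrow> 'a set \<Rightarrow> ('a \<Rightarrow> 'bo) \<Rightarrow> ('a \<Rightarrow> 'eo) \<Rightarrow> bool" where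
  "ord_mem E po A F G \<longleftrightarrow> (\<forall>a\<in>A. G a \<in> Ob E \<and> po (G a) = F a)"

definition ord_le :: "('bo,'bm) mcat \<Rightarrow> ('eo,'em) mcat \<Rightarrow> ('em \<Rightarrow> 'bm) \<Rightarrow> 'a set \<Rightarrow>
    ('a \<Rightarrow> 'bo) \<Rightarrow> ('a \<Rightarrow> 'eo) \<Rightarrow> ('a \<Rightarrow> 'eo) \<Rightarrow> bool" where
  "ord_le B E pm A F G G' \<longleftrightarrow> (\<forall>a\<in>A. lifts E pm (G a) (G' a) (idt B (F a)))"

definition BLift ::
  "('bo,'bm) mcat \<Rightarrow> ('eo,'em) mcat \<Rightarrow> ('eo \<Rightarrow> 'bo) \<Rightarrow> ('em \<Rightarrow> 'bm) \<Rightarrow> ('bo \<Rightarrow> 'eo) \<Rightarrow>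
   ('bo \<Rightarrow> 'bo) \<Rightarrow> ('bm \<Rightarrow> 'bm) \<Rightarrow> ('bo \<Rightarrow> 'bo \<Rightarrow> 'bm) \<Rightarrow>
   ('g \<Rightarrow> 'g \<Rightarrow> bool) \<Rightarrow> ('g \<Rightarrow> 'g \<Rightarrow> 'g) \<Rightarrow> ('g \<Rightarrow> 'eo \<Rightarrow> 'eo) set" where
  "BLift B E po pm Lo T kext sigma le mult = {Td.
     (\<forall>a. ord_mem E po (Ob E) (\<lambda>X. T (po X)) (Td a)) \<and>
     (\<forall>a b. le a b \<longrightarrow> ord_le B E pm (Ob E) (\<lambda>X. T (po X)) (Td a) (Td b)) \<and>
     (\<forall>a b X Y Z f. X \<in> Ob E \<longrightarrow> Y \<in> Ob E \<longrightarrow> Z \<in> Ob E \<longrightarrow>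
        f \<in> Hom B (tens B (po Z) (po X)) (T (po Y)) \<longrightarrow>
        lifts E pm (tens E Z (Lo (po X))) (Td a Y) f \<longrightarrow>
        lifts E pm (tens E Z (Td b X)) (Td (mult b a) Y)
          (cmp B (kext f) (sigma (po Z) (po X))))}"

definition blift_le ::
  "('bo,'bm) mcat \<Rightarrow> ('eo,'em) mcat \<Rightarrow> ('eo \<Rightarrow> 'bo) \<Rightarrow> ('em \<Rightarrow> 'bm) \<Rightarrow> ('bo \<Rightarrow> 'bo) \<Rightarrow>
   ('g \<Rightarrow> 'eo \<Rightarrow> 'eo) \<Rightarrow> ('g \<Rightarrow> 'eo \<Rightarrow> 'eo) \<Rightarrow> bool" where
  "blift_le B E po pm T Td Td' \<longleftrightarrow>
     (\<forall>a. ord_le B E pm (Ob E) (\<lambda>X. T (po X)) (Td a) (Td' a))"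

definition Asign ::
  "('bo,'bm) mcat \<Rightarrow> ('bo \<Rightarrow> 'bo \<Rightarrow> 'bo) \<Rightarrow> ('bo \<Rightarrow> 'bo \<Rightarrow> 'bm) \<Rightarrow>
   ('eo,'em) mcat \<Rightarrow> ('eo \<Rightarrow> 'bo) \<Rightarrow> ('em \<Rightarrow> 'bm) \<Rightarrow> ('bo \<Rightarrow> 'eo \<Rightarrow> 'eo) \<Rightarrow>
   ('bo \<Rightarrow> 'bo) \<Rightarrow> ('bm \<Rightarrow> 'bm) \<Rightarrow> ('bo \<Rightarrow> 'bo \<Rightarrow> 'bm) \<Rightarrow>
   ('g \<Rightarrow> 'g \<Rightarrow> bool) \<Rightarrow> ('g \<Rightarrow> 'g \<Rightarrow> 'g) \<Rightarrow> ('g \<Rightarrow> 'bo \<Rightarrow> 'eo) set" where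
  "Asign B ihom ev E po pm pitch T kext sigma le mult = {D.
     (\<forall>a. ord_mem E po (Ob B) T (D a)) \<and>
     (\<forall>a b. le a b \<longrightarrow> ord_le B E pm (Ob B) T (D a) (D b)) \<and>
     (\<forall>a b X Y. X \<in> Ob B \<longrightarrow> Y \<in> Ob B \<longrightarrow>
        lifts E pm (tens E (pitch X (D a Y)) (D b X)) (D (mult b a) Y)
          (kl B ihom ev T kext sigma X Y))}"

definition asign_le ::
  "('bo,'bm) mcat \<Rightarrow> ('eo,'em) mcat \<Rightarrow> ('em \<Rightarrow> 'bm) \<Rightarrow> ('bo \<Rightarrow> 'bo) \<Rightarrow>
   ('g \<Rightarrow> 'bo \<Rightarrow> 'eo) \<Rightarrow> ('g \<Rightarrow> 'bo \<Rightarrow> 'eo) \<Rightarrow> bool" where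
  "asign_le B E pm T D D' \<longleftrightarrow> (\<forall>a. ord_le B E pm (Ob B) T (D a) (D' a))"

definition preorder_equiv :: "'a set \<Rightarrow> ('a \<Rightarrow> 'a \<Rightarrow> bool) \<Rightarrow> 'b set \<Rightarrow> ('b \<Rightarrow> 'b \<Rightarrow> bool) \<Rightarrow> bool" where
  "preorder_equiv S R S' R' \<longleftrightarrow> (\<exists>\<Phi> \<Psi>.
     (\<forall>x\<in>S. \<Phi> x \<in> S') \<and> (\<forall>y\<in>S'. \<Psi> y \<in> S) \<and>
     (\<forall>x\<in>S. \<forall>x'\<in>S. R x x' \<longrightarrow> R' (\<Phi> x) (\<Phi> x')) \<and>
     (\<forall>y\<in>S'. \<forall>y'\<in>S'. R' y y' \<longrightarrow> R (\<Psi> y) (\<Psi> y')) \<and>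
     (\<forall>x\<in>S. R (\<Psi> (\<Phi> x)) x \<and> R x (\<Psi> (\<Phi> x))) \<and>
     (\<forall>y\<in>S'. R' (\<Phi> (\<Psi> y)) y \<and> R' y (\<Phi> (\<Psi> y))))"

end

theory Submission
  imports Defs
begin


lemma mon_cat: "monoidal C \<Longrightarrow> category C" by (simp add: monoidal_def)
lemma cat_id: "category C \<Longrightarrow> X \<in> Ob C \<Longrightarrow> idt C X \<in> Hom C X X"
  by (simp add: category_def)
lemma cat_comp: "category C \<Longrightarrow> f \<in> Hom C X Y \<Longrightarrow> g \<in> Hom C Y Z \<Longrightarrow> cmp C g f \<in> Hom C X Z"
  unfolding category_def by blast
lemma cat_idl: "category C \<Longrightarrow> f \<in> Hom C X Y \<Longrightarrow> cmp C (idt C Y) f = f"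
  unfolding category_def by blast
lemma cat_idr: "category C \<Longrightarrow> f \<in> Hom C X Y \<Longrightarrow> cmp C f (idt C X) = f"
  unfolding category_def by blast
lemma cat_assoc: "category C \<Longrightarrow> f \<in> Hom C W X \<Longrightarrow> g \<in> Hom C X Y \<Longrightarrow> h \<in> Hom C Y Z \<Longrightarrow>
        cmp C h (cmp C g f) = cmp C (cmp C h g) f"
  unfolding category_def by blast
lemma cat_dom: "category C \<Longrightarrow> f \<in> Hom C X Y \<Longrightarrow> X \<in> Ob C"
  unfolding category_def by (metis empty_iff)
lemma cat_cod: "category C \<Longrightarrow> f \<in> Hom C X Y \<Longrightarrow> Y \<in> Ob C"
  unfolding category_def by (metis empty_iff)

lemma mon_unit: "monoidal C \<Longrightarrow> tunit C \<in> Ob C" by (simp add: monoidal_def)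
lemma mon_tens: "monoidal C \<Longrightarrow> X \<in> Ob C \<Longrightarrow> Y \<in> Ob C \<Longrightarrow> tens C X Y \<in> Ob C"
  by (simp add: monoidal_def)
lemma mon_tensm: "monoidal C \<Longrightarrow> f \<in> Hom C X X' \<Longrightarrow> g \<in> Hom C Y Y' \<Longrightarrow>
        tensm C f g \<in> Hom C (tens C X Y) (tens C X' Y')"
  unfolding monoidal_def by (elim conjE) blast
lemma mon_tensm_id: "monoidal C \<Longrightarrow> X \<in> Ob C \<Longrightarrow> Y \<in> Ob C \<Longrightarrow>
   tensm C (idt C X) (idt C Y) = idt C (tens C X Y)"
  unfolding monoidal_def by (elim conjE) blast
lemma mon_tensm_cmp: "monoidal C \<Longrightarrow> f \<in> Hom C X X' \<Longrightarrow> f' \<in> Hom C X' X'' \<Longrightarrow>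
        g \<in> Hom C Y Y' \<Longrightarrow> g' \<in> Hom C Y' Y'' \<Longrightarrow>
        tensm C (cmp C f' f) (cmp C g' g) = cmp C (tensm C f' g') (tensm C f g)"
proof -
  assume "monoidal C" "f \<in> Hom C X X'" "f' \<in> Hom C X' X''" "g \<in> Hom C Y Y'" "g' \<in> Hom C Y' Y''"
  moreover have "\<forall>X X' X'' Y Y' Y'' f f' g g'. f \<in> Hom C X X' \<longrightarrow> f' \<in> Hom C X' X'' \<longrightarrow>
        g \<in> Hom C Y Y' \<longrightarrow> g' \<in> Hom C Y' Y'' \<longrightarrow>
        tensm C (cmp C f' f) (cmp C g' g) = cmp C (tensm C f' g') (tensm C f g)"
    using \<open>monoidal C\<close> unfolding monoidal_def by (elim conjE) assumption
  ultimately show ?thesis by blast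
qed
lemma mon_lu: "monoidal C \<Longrightarrow> X \<in> Ob C \<Longrightarrow> iso_in C (lu C X) (tens C (tunit C) X) X"
  by (simp add: monoidal_def)

lemma tensm_cmp_id:
  assumes "monoidal C" "f \<in> Hom C X X'" "f' \<in> Hom C X' X''" "K \<in> Ob C"
  shows "tensm C (cmp C f' f) (idt C K) = cmp C (tensm C f' (idt C K)) (tensm C f (idt C K))"
proof -
  have c: "category C" using assms(1) by (rule mon_cat)
  have "idt C K = cmp C (idt C K) (idt C K)" using cat_idl[OF c cat_id[OF c assms(4)]] by simp
  then have "tensm C (cmp C f' f) (idt C K) = tensm C (cmp C f' f) (cmp C (idt C K) (idt C K))"
    by simp
  also have "\<dots> = cmp C (tensm C f' (idt C K)) (tensm C f (idt C K))"
    using mon_tensm_cmp[OF assms(1) assms(2,3) cat_id[OF c assms(4)] cat_id[OF c assms(4)]] .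
  finally show ?thesis .
qed

lemma radj_map_prop:
  assumes m: "monoidal C" and adj: "is_right_adj C K ih ev" and K: "K \<in> Ob C"
    and h: "h \<in> Hom C A A'"
  shows "radj_map C K ih ev A A' h \<in> Hom C (ih A) (ih A') \<and>
         cmp C (ev A') (tensm C (radj_map C K ih ev A A' h) (idt C K)) = cmp C h (ev A)"
proof -
  have c: "category C" using m by (rule mon_cat)
  have A: "A \<in> Ob C" using cat_dom[OF c h] .
  have A': "A' \<in> Ob C" using cat_cod[OF c h] .
  have ihA: "ih A \<in> Ob C" and evA: "ev A \<in> Hom C (tens C (ih A) K) A"
    using adj A unfolding is_right_adj_def by auto
  have f: "cmp C h (ev A) \<in> Hom C (tens C (ih A) K) A'" using cat_comp[OF c evA h] .
  have "\<exists>!g. g \<in> Hom C (ih A) (ih A') \<and> cmp C (ev A') (tensm C g (idt C K)) = cmp C h (ev A)"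
    using adj A' ihA f unfolding is_right_adj_def by blast
  then show ?thesis unfolding radj_map_def by (rule theI')
qed

lemma radj_unit_prop:
  assumes m: "monoidal C" and adj: "is_right_adj C K ih ev" and K: "K \<in> Ob C"
    and Z: "Z \<in> Ob C"
  shows "radj_unit C K ih ev Z \<in> Hom C Z (ih (tens C Z K)) \<and>
         cmp C (ev (tens C Z K)) (tensm C (radj_unit C K ih ev Z) (idt C K)) = idt C (tens C Z K)"
proof -
  have c: "category C" using m by (rule mon_cat)
  have ZK: "tens C Z K \<in> Ob C" using mon_tens[OF m Z K] .
  have "\<exists>!g. g \<in> Hom C Z (ih (tens C Z K)) \<and> cmp C (ev (tens C Z K)) (tensm C g (idt C K)) = idt C (tens C Z K)"
    using adj ZK Z cat_id[OF c ZK] unfolding is_right_adj_def by blast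
  then show ?thesis unfolding radj_unit_def by (rule theI')
qed

lemma transpose_eq:
  assumes m: "monoidal C" and adj: "is_right_adj C K ih ev" and K: "K \<in> Ob C"
    and Z: "Z \<in> Ob C" and h: "h \<in> Hom C (tens C Z K) A"
  shows "cmp C (radj_map C K ih ev (tens C Z K) A h) (radj_unit C K ih ev Z) \<in> Hom C Z (ih A)"
    and "cmp C (ev A) (tensm C (cmp C (radj_map C K ih ev (tens C Z K) A h) (radj_unit C K ih ev Z)) (idt C K)) = h"
proof -
  have c: "category C" using m by (rule mon_cat)
  note g = radj_map_prop[OF m adj K h]
  note u = radj_unit_prop[OF m adj K Z]
  have A: "A \<in> Ob C" using cat_cod[OF c h] .
  have ZK: "tens C Z K \<in> Ob C" using mon_tens[OF m Z K] .
  have evZK: "ev (tens C Z K) \<in> Hom C (tens C (ih (tens C Z K)) K) (tens C Z K)"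
    using adj ZK unfolding is_right_adj_def by auto
  have evA: "ev A \<in> Hom C (tens C (ih A) K) A"
    using adj A unfolding is_right_adj_def by auto
  have idK: "idt C K \<in> Hom C K K" using cat_id[OF c K] .
  have gt: "tensm C (radj_map C K ih ev (tens C Z K) A h) (idt C K) \<in> Hom C (tens C (ih (tens C Z K)) K) (tens C (ih A) K)"
    using mon_tensm[OF m conjunct1[OF g] idK] .
  have ut: "tensm C (radj_unit C K ih ev Z) (idt C K) \<in> Hom C (tens C Z K) (tens C (ih (tens C Z K)) K)"
    using mon_tensm[OF m conjunct1[OF u] idK] .
  show "cmp C (radj_map C K ih ev (tens C Z K) A h) (radj_unit C K ih ev Z) \<in> Hom C Z (ih A)"
    using cat_comp[OF c conjunct1[OF u] conjunct1[OF g]] .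
  have "cmp C (ev A) (tensm C (cmp C (radj_map C K ih ev (tens C Z K) A h) (radj_unit C K ih ev Z)) (idt C K))
     = cmp C (ev A) (cmp C (tensm C (radj_map C K ih ev (tens C Z K) A h) (idt C K)) (tensm C (radj_unit C K ih ev Z) (idt C K)))"
    using tensm_cmp_id[OF m conjunct1[OF u] conjunct1[OF g] K] by simp
  also have "\<dots> = cmp C (cmp C (ev A) (tensm C (radj_map C K ih ev (tens C Z K) A h) (idt C K))) (tensm C (radj_unit C K ih ev Z) (idt C K))"
    using cat_assoc[OF c ut gt evA] .
  also have "\<dots> = cmp C (cmp C h (ev (tens C Z K))) (tensm C (radj_unit C K ih ev Z) (idt C K))"
    using g by simp
  also have "\<dots> = cmp C h (cmp C (ev (tens C Z K)) (tensm C (radj_unit C K ih ev Z) (idt C K)))"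
    using cat_assoc[OF c ut evZK h] by simp
  also have "\<dots> = h" using u cat_idr[OF c h] by simp
  finally show "cmp C (ev A) (tensm C (cmp C (radj_map C K ih ev (tens C Z K) A h) (radj_unit C K ih ev Z)) (idt C K)) = h" .
qed

lemma triangle:
  assumes m: "monoidal C" and adj: "is_right_adj C K ih ev" and K: "K \<in> Ob C"
    and A: "A \<in> Ob C"
  shows "cmp C (radj_map C K ih ev (tens C (ih A) K) A (ev A)) (radj_unit C K ih ev (ih A)) = idt C (ih A)"
proof -
  have c: "category C" using m by (rule mon_cat)
  have ihA: "ih A \<in> Ob C" and evA: "ev A \<in> Hom C (tens C (ih A) K) A"
    using adj A unfolding is_right_adj_def by auto
  have uq: "\<exists>!g. g \<in> Hom C (ih A) (ih A) \<and> cmp C (ev A) (tensm C g (idt C K)) = ev A"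
    using adj A ihA evA unfolding is_right_adj_def by blast
  note t = transpose_eq[OF m adj K ihA evA]
  have "cmp C (ev A) (tensm C (idt C (ih A)) (idt C K)) = ev A"
    using mon_tensm_id[OF m ihA K] cat_idr[OF c evA] by simp
  then show ?thesis using uq t cat_id[OF c ihA] by blast
qed



locale thm3 =
  fixes B :: "('bo,'bm) mcat" and ihom :: "'bo \<Rightarrow> 'bo \<Rightarrow> 'bo" and ev :: "'bo \<Rightarrow> 'bo \<Rightarrow> 'bm"
    and E :: "('eo,'em) mcat" and po :: "'eo \<Rightarrow> 'bo" and pm :: "'em \<Rightarrow> 'bm"
    and Lo :: "'bo \<Rightarrow> 'eo" and Lm :: "'bm \<Rightarrow> 'em"
    and pitch :: "'bo \<Rightarrow> 'eo \<Rightarrow> 'eo" and evE :: "'bo \<Rightarrow> 'eo \<Rightarrow> 'em"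
    and T :: "'bo \<Rightarrow> 'bo" and eta :: "'bo \<Rightarrow> 'bm" and kext :: "'bm \<Rightarrow> 'bm"
    and sigma :: "'bo \<Rightarrow> 'bo \<Rightarrow> 'bm"
    and le :: "'g \<Rightarrow> 'g \<Rightarrow> bool" and one :: 'g and mult :: "'g \<Rightarrow> 'g \<Rightarrow> 'g"
  assumes wc: "wc_refinement B ihom ev E po pm Lo Lm pitch evE"
    and sm: "strong_monad B T eta kext sigma"
    and pmon: "preordered_monoid le one mult"
begin

lemma smcB: "sym_monoidal_closed B ihom ev"
  using wc unfolding wc_refinement_def by (elim conjE) assumption
lemma mB: "monoidal B"
  using smcB unfolding sym_monoidal_closed_def symmetric_monoidal_def by (elim conjE) assumption
lemma cB: "category B" using mB by (rule mon_cat)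
lemma adjB: "X \<in> Ob B \<Longrightarrow> is_right_adj B X (ihom X) (ev X)"
  using smcB unfolding sym_monoidal_closed_def by blast
lemma mE: "monoidal E"
  using wc unfolding wc_refinement_def symmetric_monoidal_def by (elim conjE) assumption
lemma cE: "category E" using mE by (rule mon_cat)
lemma ssmf: "strict_sym_monoidal_functor E B po pm"
  using wc unfolding wc_refinement_def by (elim conjE) assumption
lemma fp: "is_functor E B po pm"
  using ssmf unfolding strict_sym_monoidal_functor_def by (elim conjE) assumption
lemma po_ob: "X \<in> Ob E \<Longrightarrow> po X \<in> Ob B"
  using fp unfolding is_functor_def by blast
lemma pm_hom: "f \<in> Hom E X Y \<Longrightarrow> pm f \<in> Hom B (po X) (po Y)"
  using fp unfolding is_functor_def by blast
lemma pm_id: "X \<in> Ob E \<Longrightarrow> pm (idt E X) = idt B (po X)"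
  using fp unfolding is_functor_def by blast
lemma pm_cmp: "f \<in> Hom E X Y \<Longrightarrow> g \<in> Hom E Y Z \<Longrightarrow> pm (cmp E g f) = cmp B (pm g) (pm f)"
  using fp unfolding is_functor_def by blast
lemma po_unit: "po (tunit E) = tunit B"
  using ssmf unfolding strict_sym_monoidal_functor_def by blast
lemma pm_tensm: "f \<in> Hom E X X' \<Longrightarrow> g \<in> Hom E Y Y' \<Longrightarrow> pm (tensm E f g) = tensm B (pm f) (pm g)"
  using ssmf unfolding strict_sym_monoidal_functor_def by blast
lemma pm_lu: "X \<in> Ob E \<Longrightarrow> pm (lu E X) = lu B (po X)"
  using ssmf unfolding strict_sym_monoidal_functor_def by blast
lemma fL: "is_functor B E Lo Lm"
  using wc unfolding wc_refinement_def by (elim conjE) assumption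
lemma Lo_ob: "X \<in> Ob B \<Longrightarrow> Lo X \<in> Ob E"
  using fL unfolding is_functor_def by blast
lemma po_Lo: "X \<in> Ob B \<Longrightarrow> po (Lo X) = X"
proof -
  assume a: "X \<in> Ob B"
  have "\<forall>X\<in>Ob B. po (Lo X) = X"
    using wc unfolding wc_refinement_def by (elim conjE) assumption
  then show ?thesis using a by blast
qed
lemma L_univ: "X \<in> Ob B \<Longrightarrow> A \<in> Ob E \<Longrightarrow> f \<in> Hom B X (po A) \<Longrightarrow> \<exists>g. g \<in> Hom E (Lo X) A \<and> pm g = f"
proof -
  assume a: "X \<in> Ob B" "A \<in> Ob E" "f \<in> Hom B X (po A)"
  have "\<forall>X\<in>Ob B. \<forall>A\<in>Ob E. \<forall>f\<in>Hom B X (po A). \<exists>!g. g \<in> Hom E (Lo X) A \<and> pm g = f"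
    using wc unfolding wc_refinement_def by (elim conjE) assumption
  then show ?thesis using a by blast
qed
lemma adjE: "X \<in> Ob B \<Longrightarrow> is_right_adj E (Lo X) (pitch X) (evE X)"
  using wc unfolding wc_refinement_def by blast
lemma po_tensL: "X \<in> Ob B \<Longrightarrow> Z \<in> Ob E \<Longrightarrow> po (tens E Z (Lo X)) = tens B (po Z) X"
  using wc unfolding wc_refinement_def by blast
lemma po_pitch: "X \<in> Ob B \<Longrightarrow> A \<in> Ob E \<Longrightarrow> po (pitch X A) = ihom X (po A)"
  using wc unfolding wc_refinement_def by blast
lemma pm_radj_map: "X \<in> Ob B \<Longrightarrow> h \<in> Hom E A A' \<Longrightarrow>
        pm (radj_map E (Lo X) (pitch X) (evE X) A A' h)
          = radj_map B X (ihom X) (ev X) (po A) (po A') (pm h)"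
proof -
  assume a: "X \<in> Ob B" "h \<in> Hom E A A'"
  have "\<forall>X\<in>Ob B. \<forall>A A' h. h \<in> Hom E A A' \<longrightarrow>
        pm (radj_map E (Lo X) (pitch X) (evE X) A A' h)
          = radj_map B X (ihom X) (ev X) (po A) (po A') (pm h)"
    using wc unfolding wc_refinement_def by (elim conjE) assumption
  then show ?thesis using a by blast
qed
lemma pm_radj_unit: "X \<in> Ob B \<Longrightarrow> Z \<in> Ob E \<Longrightarrow>
        pm (radj_unit E (Lo X) (pitch X) (evE X) Z) = radj_unit B X (ihom X) (ev X) (po Z)"
proof -
  assume a: "X \<in> Ob B" "Z \<in> Ob E"
  have "\<forall>X\<in>Ob B. \<forall>Z\<in>Ob E.
        pm (radj_unit E (Lo X) (pitch X) (evE X) Z) = radj_unit B X (ihom X) (ev X) (po Z)"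
    using wc unfolding wc_refinement_def by (elim conjE) assumption
  then show ?thesis using a by blast
qed

lemmas S0 = sm[unfolded strong_monad_def]
lemmas S1 = conjunct1[OF S0] and R1 = conjunct2[OF S0]
lemmas S2 = conjunct1[OF R1] and R2 = conjunct2[OF R1]
lemmas S3 = conjunct1[OF R2] and R3 = conjunct2[OF R2]
lemmas S4 = conjunct1[OF R3] and R4 = conjunct2[OF R3]
lemmas S5 = conjunct1[OF R4] and R5 = conjunct2[OF R4]
lemmas S6 = conjunct1[OF R5] and R6 = conjunct2[OF R5]
lemmas S7 = conjunct1[OF R6] and R7 = conjunct2[OF R6]
lemmas S8 = conjunct1[OF R7] and R8 = conjunct2[OF R7]

lemma T_ob: "X \<in> Ob B \<Longrightarrow> T X \<in> Ob B" using S1 by blast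
lemma eta_hom: "X \<in> Ob B \<Longrightarrow> eta X \<in> Hom B X (T X)" using S1 by blast
lemma kext_hom: "f \<in> Hom B X (T Y) \<Longrightarrow> kext f \<in> Hom B (T X) (T Y)"
  using S2 by blast
lemma kext_eta: "f \<in> Hom B X (T Y) \<Longrightarrow> cmp B (kext f) (eta X) = f"
  using S4 by blast
lemma kext_comp: "f \<in> Hom B X (T Y) \<Longrightarrow> g \<in> Hom B Y (T Z) \<Longrightarrow>
        cmp B (kext g) (kext f) = kext (cmp B (kext g) f)"
  using S5 by blast
lemma sigma_hom: "X \<in> Ob B \<Longrightarrow> Y \<in> Ob B \<Longrightarrow> sigma X Y \<in> Hom B (tens B X (T Y)) (T (tens B X Y))"
  using S6 by blast
lemma sigma_nat: "g \<in> Hom B X X' \<Longrightarrow> Y \<in> Ob B \<Longrightarrow>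
        cmp B (sigma X' Y) (tensm B g (idt B (T Y)))
          = cmp B (kext (cmp B (eta (tens B X' Y)) (tensm B g (idt B Y)))) (sigma X Y)"
proof -
  assume a: "g \<in> Hom B X X'" "Y \<in> Ob B"
  have "\<forall>X X' Y g. g \<in> Hom B X X' \<longrightarrow> Y \<in> Ob B \<longrightarrow>
        cmp B (sigma X' Y) (tensm B g (idt B (T Y)))
          = cmp B (kext (cmp B (eta (tens B X' Y)) (tensm B g (idt B Y)))) (sigma X Y)"
    using sm unfolding strong_monad_def by (elim conjE) assumption
  then show ?thesis using a by blast
qed
lemma sigma_lu: "X \<in> Ob B \<Longrightarrow> cmp B (kext (cmp B (eta X) (lu B X))) (sigma (tunit B) X) = lu B (T X)"
  using S8 by blast
lemma mult_one: "mult b one = b" using pmon unfolding preordered_monoid_def by simp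


lemma ev_hom: "X \<in> Ob B \<Longrightarrow> A \<in> Ob B \<Longrightarrow> ihom X A \<in> Ob B \<and> ev X A \<in> Hom B (tens B (ihom X A) X) A"
  using adjB unfolding is_right_adj_def by blast

lemma evE_hom: "X \<in> Ob B \<Longrightarrow> A \<in> Ob E \<Longrightarrow> pitch X A \<in> Ob E \<and> evE X A \<in> Hom E (tens E (pitch X A) (Lo X)) A"
  using adjE unfolding is_right_adj_def by blast

lemma pm_evE:
  assumes X: "X \<in> Ob B" and A: "A \<in> Ob E"
  shows "pm (evE X A) = ev X (po A)"
proof -
  define P where "P = pitch X A"
  define Z where "Z = ihom X (po A)"
  have P: "P \<in> Ob E" and eE: "evE X A \<in> Hom E (tens E P (Lo X)) A"
    using evE_hom[OF X A] unfolding P_def by auto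
  have poP: "po P = Z" unfolding P_def Z_def using po_pitch[OF X A] .
  have LX: "Lo X \<in> Ob E" using Lo_ob[OF X] .
  have pA: "po A \<in> Ob B" using po_ob[OF A] .
  have Z: "Z \<in> Ob B" and evB: "ev X (po A) \<in> Hom B (tens B Z X) (po A)"
    using ev_hom[OF X pA] unfolding Z_def by auto
  have poPL: "po (tens E P (Lo X)) = tens B Z X" using po_tensL[OF X P] poP by simp
  have e: "pm (evE X A) \<in> Hom B (tens B Z X) (po A)" using pm_hom[OF eE] poPL by simp
  note tB = transpose_eq[OF mB adjB[OF X] X Z e]
  note gE = radj_map_prop[OF mE adjE[OF X] LX eE]
  note uE = radj_unit_prop[OF mE adjE[OF X] LX P]
  have tri: "cmp E (radj_map E (Lo X) (pitch X) (evE X) (tens E P (Lo X)) A (evE X A))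
      (radj_unit E (Lo X) (pitch X) (evE X) P) = idt E P"
    using triangle[OF mE adjE[OF X] LX A] unfolding P_def .
  have "cmp B (radj_map B X (ihom X) (ev X) (tens B Z X) (po A) (pm (evE X A))) (radj_unit B X (ihom X) (ev X) Z)
     = cmp B (pm (radj_map E (Lo X) (pitch X) (evE X) (tens E P (Lo X)) A (evE X A)))
            (pm (radj_unit E (Lo X) (pitch X) (evE X) P))"
    using pm_radj_map[OF X eE] pm_radj_unit[OF X P] poPL poP by simp
  also have "\<dots> = pm (idt E P)"
    using pm_cmp[OF conjunct1[OF uE] conjunct1[OF gE]] tri unfolding P_def by simp
  also have "\<dots> = idt B Z" using pm_id[OF P] poP by simp
  finally have eq: "cmp B (radj_map B X (ihom X) (ev X) (tens B Z X) (po A) (pm (evE X A))) (radj_unit B X (ihom X) (ev X) Z) = idt B Z" .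
  have "pm (evE X A) = cmp B (ev X (po A)) (tensm B (idt B Z) (idt B X))"
    using tB(2) eq by simp
  also have "\<dots> = ev X (po A)" using mon_tensm_id[OF mB Z X] cat_idr[OF cB evB] by simp
  finally show ?thesis .
qed

lemma blift_ob:
  assumes "Td \<in> BLift B E po pm Lo T kext sigma le mult" "X \<in> Ob E"
  shows "Td a X \<in> Ob E \<and> po (Td a X) = T (po X)"
  using assms unfolding BLift_def ord_mem_def by blast

lemma blift_main:
  assumes "Td \<in> BLift B E po pm Lo T kext sigma le mult"
    "X \<in> Ob E" "Y \<in> Ob E" "Z \<in> Ob E"
    "f \<in> Hom B (tens B (po Z) (po X)) (T (po Y))"
    "lifts E pm (tens E Z (Lo (po X))) (Td a Y) f"
  shows "lifts E pm (tens E Z (Td b X)) (Td (mult b a) Y) (cmp B (kext f) (sigma (po Z) (po X)))"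
  using assms unfolding BLift_def by blast

lemma blift_inv:
  assumes Td: "Td \<in> BLift B E po pm Lo T kext sigma le mult"
    and X: "X \<in> Ob E" and Y: "Y \<in> Ob E" and eq: "po X = po Y"
  shows "lifts E pm (Td b X) (Td b Y) (idt B (T (po X)))"
proof -
  define pX where "pX = po X"
  have pX: "pX \<in> Ob B" unfolding pX_def using po_ob[OF X] .
  have TY1: "Td one Y \<in> Ob E" "po (Td one Y) = T pX" using blift_ob[OF Td Y] eq pX_def by auto
  have "eta pX \<in> Hom B pX (po (Td one Y))" using eta_hom[OF pX] TY1 by simp
  then obtain g0 where g0: "g0 \<in> Hom E (Lo pX) (Td one Y)" "pm g0 = eta pX"
    using L_univ[OF pX TY1(1)] by blast
  have LX: "Lo pX \<in> Ob E" using Lo_ob[OF pX] .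
  have luL: "lu E (Lo pX) \<in> Hom E (tens E (tunit E) (Lo pX)) (Lo pX)"
    using mon_lu[OF mE LX] unfolding iso_in_def by blast
  have g1: "cmp E g0 (lu E (Lo pX)) \<in> Hom E (tens E (tunit E) (Lo pX)) (Td one Y)"
    using cat_comp[OF cE luL g0(1)] .
  have pg1: "pm (cmp E g0 (lu E (Lo pX))) = cmp B (eta pX) (lu B pX)"
    using pm_cmp[OF luL g0(1)] g0(2) pm_lu[OF LX] po_Lo[OF pX] by simp
  have luB: "lu B pX \<in> Hom B (tens B (tunit B) pX) pX"
    using mon_lu[OF mB pX] unfolding iso_in_def by blast
  have f: "cmp B (eta pX) (lu B pX) \<in> Hom B (tens B (po (tunit E)) (po X)) (T (po Y))"
    using cat_comp[OF cB luB eta_hom[OF pX]] po_unit eq pX_def by simp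
  have lf: "lifts E pm (tens E (tunit E) (Lo (po X))) (Td one Y) (cmp B (eta pX) (lu B pX))"
    unfolding lifts_def using g1 pg1 pX_def by blast
  have "lifts E pm (tens E (tunit E) (Td b X)) (Td (mult b one) Y)
          (cmp B (kext (cmp B (eta pX) (lu B pX))) (sigma (po (tunit E)) (po X)))"
    using blift_main[OF Td X Y mon_unit[OF mE] f lf] .
  then have "lifts E pm (tens E (tunit E) (Td b X)) (Td b Y) (lu B (T pX))"
    using sigma_lu[OF pX] po_unit mult_one pX_def by simp
  then obtain h where h: "h \<in> Hom E (tens E (tunit E) (Td b X)) (Td b Y)" "pm h = lu B (T pX)"
    unfolding lifts_def by blast
  define W where "W = Td b X"
  have W: "W \<in> Ob E" "po W = T pX" using blift_ob[OF Td X] pX_def W_def by auto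
  obtain k where k: "k \<in> Hom E W (tens E (tunit E) W)" "cmp E (lu E W) k = idt E W"
    using mon_lu[OF mE W(1)] unfolding iso_in_def by blast
  have luW: "lu E W \<in> Hom E (tens E (tunit E) W) W"
    using mon_lu[OF mE W(1)] unfolding iso_in_def by blast
  have "cmp E h k \<in> Hom E W (Td b Y)" using cat_comp[OF cE k(1) h(1)[folded W_def]] .
  moreover have "pm (cmp E h k) = idt B (T (po X))"
  proof -
    have "pm (cmp E h k) = cmp B (lu B (T pX)) (pm k)" using pm_cmp[OF k(1) h(1)[folded W_def]] h(2) by simp
    also have "\<dots> = cmp B (pm (lu E W)) (pm k)" using pm_lu[OF W(1)] W(2) by simp
    also have "\<dots> = pm (idt E W)" using pm_cmp[OF k(1) luW] k(2) by simp
    also have "\<dots> = idt B (T (po X))" using pm_id[OF W(1)] W(2) pX_def by simp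
    finally show ?thesis .
  qed
  ultimately show ?thesis unfolding lifts_def W_def by blast
qed


lemma phi_mem:
  assumes Td: "Td \<in> BLift B E po pm Lo T kext sigma le mult"
  shows "(\<lambda>a X. Td a (Lo X)) \<in> Asign B ihom ev E po pm pitch T kext sigma le mult"
proof -
  have ob: "\<forall>a. ord_mem E po (Ob B) T (\<lambda>X. Td a (Lo X))"
    unfolding ord_mem_def using blift_ob[OF Td Lo_ob] po_Lo by simp
  have mono: "\<forall>a b. le a b \<longrightarrow> ord_le B E pm (Ob B) T (\<lambda>X. Td a (Lo X)) (\<lambda>X. Td b (Lo X))"
  proof (intro allI impI)
    fix a b assume "le a b"
    then have "ord_le B E pm (Ob E) (\<lambda>X. T (po X)) (Td a) (Td b)"
      using Td unfolding BLift_def by blast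
    then show "ord_le B E pm (Ob B) T (\<lambda>X. Td a (Lo X)) (\<lambda>X. Td b (Lo X))"
      unfolding ord_le_def using Lo_ob po_Lo by fastforce
  qed
  have kl: "lifts E pm (tens E (pitch X (Td a (Lo Y))) (Td b (Lo X))) (Td (mult b a) (Lo Y))
          (kl B ihom ev T kext sigma X Y)" if X: "X \<in> Ob B" and Y: "Y \<in> Ob B" for a b X Y
  proof -
    define A where "A = Td a (Lo Y)"
    have A: "A \<in> Ob E" "po A = T Y" using blift_ob[OF Td Lo_ob[OF Y]] po_Lo[OF Y] A_def by auto
    define Z where "Z = pitch X A"
    have Z: "Z \<in> Ob E" "evE X A \<in> Hom E (tens E Z (Lo X)) A"
      using evE_hom[OF X A(1)] Z_def by auto
    have poZ: "po Z = ihom X (T Y)" using po_pitch[OF X A(1)] A(2) Z_def by simp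
    have f: "ev X (T Y) \<in> Hom B (tens B (po Z) (po (Lo X))) (T (po (Lo Y)))"
      using ev_hom[OF X T_ob[OF Y]] poZ po_Lo[OF X] po_Lo[OF Y] by simp
    have lf: "lifts E pm (tens E Z (Lo (po (Lo X)))) (Td a (Lo Y)) (ev X (T Y))"
      unfolding lifts_def using Z(2) pm_evE[OF X A(1)] A(2) po_Lo[OF X] A_def by auto
    have "lifts E pm (tens E Z (Td b (Lo X))) (Td (mult b a) (Lo Y))
           (cmp B (kext (ev X (T Y))) (sigma (po Z) (po (Lo X))))"
      using blift_main[OF Td Lo_ob[OF X] Lo_ob[OF Y] Z(1) f lf] .
    then show ?thesis unfolding kl_def Z_def A_def using poZ po_Lo[OF X] Z_def A_def by simp
  qed
  show ?thesis unfolding Asign_def using ob mono kl by blast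
qed

lemma asign_ob:
  assumes "D \<in> Asign B ihom ev E po pm pitch T kext sigma le mult" "X \<in> Ob B"
  shows "D a X \<in> Ob E \<and> po (D a X) = T X"
  using assms unfolding Asign_def ord_mem_def by blast

lemma asign_kl:
  assumes "D \<in> Asign B ihom ev E po pm pitch T kext sigma le mult" "X \<in> Ob B" "Y \<in> Ob B"
  shows "lifts E pm (tens E (pitch X (D a Y)) (D b X)) (D (mult b a) Y)
          (kl B ihom ev T kext sigma X Y)"
  using assms unfolding Asign_def by blast

lemma psi_mem:
  assumes D: "D \<in> Asign B ihom ev E po pm pitch T kext sigma le mult"
  shows "(\<lambda>a Y. D a (po Y)) \<in> BLift B E po pm Lo T kext sigma le mult"
proof -
  have ob: "\<forall>a. ord_mem E po (Ob E) (\<lambda>X. T (po X)) (\<lambda>Y. D a (po Y))"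
    unfolding ord_mem_def using asign_ob[OF D po_ob] by simp
  have mono: "\<forall>a b. le a b \<longrightarrow> ord_le B E pm (Ob E) (\<lambda>X. T (po X)) (\<lambda>Y. D a (po Y)) (\<lambda>Y. D b (po Y))"
  proof (intro allI impI)
    fix a b assume "le a b"
    then have "ord_le B E pm (Ob B) T (D a) (D b)"
      using D unfolding Asign_def by blast
    then show "ord_le B E pm (Ob E) (\<lambda>X. T (po X)) (\<lambda>Y. D a (po Y)) (\<lambda>Y. D b (po Y))"
      unfolding ord_le_def using po_ob by fastforce
  qed
  have main: "lifts E pm (tens E Z (D b (po X))) (D (mult b a) (po Y)) (cmp B (kext f) (sigma (po Z) (po X)))"
    if X: "X \<in> Ob E" and Y: "Y \<in> Ob E" and Z: "Z \<in> Ob E"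
      and f: "f \<in> Hom B (tens B (po Z) (po X)) (T (po Y))"
      and lf: "lifts E pm (tens E Z (Lo (po X))) (D a (po Y)) f" for a b X Y Z f
  proof -
    define pX where "pX = po X"
    define pY where "pY = po Y"
    define pZ where "pZ = po Z"
    have pX: "pX \<in> Ob B" and pY: "pY \<in> Ob B" and pZ: "pZ \<in> Ob B"
      using po_ob X Y Z pX_def pY_def pZ_def by auto
    define K where "K = Lo pX"
    have K: "K \<in> Ob E" using Lo_ob[OF pX] K_def by simp
    define A where "A = D a pY"
    have A: "A \<in> Ob E" "po A = T pY" using asign_ob[OF D pY] A_def by auto
    obtain g where g: "g \<in> Hom E (tens E Z K) A" "pm g = f"
      using lf unfolding lifts_def K_def A_def pX_def pY_def by blast
    have f': "f \<in> Hom B (tens B pZ pX) (T pY)" using f pX_def pY_def pZ_def by simp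
    define t where "t = cmp E (radj_map E K (pitch pX) (evE pX) (tens E Z K) A g) (radj_unit E K (pitch pX) (evE pX) Z)"
    have adjK: "is_right_adj E K (pitch pX) (evE pX)" using adjE[OF pX] K_def by simp
    have t: "t \<in> Hom E Z (pitch pX A)" using transpose_eq(1)[OF mE adjK K Z g(1)] t_def by simp
    have poZK: "po (tens E Z K) = tens B pZ pX" using po_tensL[OF pX Z] K_def pZ_def by simp
    define t' where "t' = cmp B (radj_map B pX (ihom pX) (ev pX) (tens B pZ pX) (T pY) f) (radj_unit B pX (ihom pX) (ev pX) pZ)"
    note gm = radj_map_prop[OF mE adjK K g(1)]
    note um = radj_unit_prop[OF mE adjK K Z]
    have pt: "pm t = t'"
      unfolding t_def t'_def
      using pm_cmp[OF conjunct1[OF um] conjunct1[OF gm]] pm_radj_map[OF pX g(1)] pm_radj_unit[OF pX Z]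
        poZK A(2) g(2) K_def pZ_def by simp
    note tB = transpose_eq[OF mB adjB[OF pX] pX pZ f']
    have t': "t' \<in> Hom B pZ (ihom pX (T pY))" using tB(1) t'_def by simp
    have tev: "cmp B (ev pX (T pY)) (tensm B t' (idt B pX)) = f" using tB(2) t'_def by simp
    obtain k where k: "k \<in> Hom E (tens E (pitch pX A) (D b pX)) (D (mult b a) pY)"
       "pm k = kl B ihom ev T kext sigma pX pY"
      using asign_kl[OF D pX pY] unfolding lifts_def A_def by blast
    define W where "W = D b pX"
    have W: "W \<in> Ob E" "po W = T pX" using asign_ob[OF D pX] W_def by auto
    have idW: "idt E W \<in> Hom E W W" using cat_id[OF cE W(1)] .
    have tW: "tensm E t (idt E W) \<in> Hom E (tens E Z W) (tens E (pitch pX A) W)"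
      using mon_tensm[OF mE t idW] .
    have comp: "cmp E k (tensm E t (idt E W)) \<in> Hom E (tens E Z W) (D (mult b a) pY)"
      using cat_comp[OF cE tW k(1)[folded W_def]] .
    have pc: "pm (cmp E k (tensm E t (idt E W))) = cmp B (kl B ihom ev T kext sigma pX pY) (tensm B t' (idt B (T pX)))"
      using pm_cmp[OF tW k(1)[folded W_def]] k(2) pm_tensm[OF t idW] pt pm_id[OF W(1)] W(2) by simp
    have TpY: "T pY \<in> Ob B" using T_ob[OF pY] .
    have ihO: "ihom pX (T pY) \<in> Ob B" and evh: "ev pX (T pY) \<in> Hom B (tens B (ihom pX (T pY)) pX) (T pY)"
      using ev_hom[OF pX TpY] by auto
    have kev: "kext (ev pX (T pY)) \<in> Hom B (T (tens B (ihom pX (T pY)) pX)) (T pY)"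
      using kext_hom[OF evh] .
    have sig1: "sigma (ihom pX (T pY)) pX \<in> Hom B (tens B (ihom pX (T pY)) (T pX)) (T (tens B (ihom pX (T pY)) pX))"
      using sigma_hom[OF ihO pX] .
    have sig0: "sigma pZ pX \<in> Hom B (tens B pZ (T pX)) (T (tens B pZ pX))"
      using sigma_hom[OF pZ pX] .
    have idTX: "idt B (T pX) \<in> Hom B (T pX) (T pX)" using cat_id[OF cB T_ob[OF pX]] .
    have idX: "idt B pX \<in> Hom B pX pX" using cat_id[OF cB pX] .
    have tt: "tensm B t' (idt B (T pX)) \<in> Hom B (tens B pZ (T pX)) (tens B (ihom pX (T pY)) (T pX))"
      using mon_tensm[OF mB t' idTX] .
    have tX: "tensm B t' (idt B pX) \<in> Hom B (tens B pZ pX) (tens B (ihom pX (T pY)) pX)"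
      using mon_tensm[OF mB t' idX] .
    have etah: "eta (tens B (ihom pX (T pY)) pX) \<in> Hom B (tens B (ihom pX (T pY)) pX) (T (tens B (ihom pX (T pY)) pX))"
      using eta_hom[OF mon_tens[OF mB ihO pX]] .
    have e1: "cmp B (eta (tens B (ihom pX (T pY)) pX)) (tensm B t' (idt B pX)) \<in> Hom B (tens B pZ pX) (T (tens B (ihom pX (T pY)) pX))"
      using cat_comp[OF cB tX etah] .
    have ke1: "kext (cmp B (eta (tens B (ihom pX (T pY)) pX)) (tensm B t' (idt B pX))) \<in> Hom B (T (tens B pZ pX)) (T (tens B (ihom pX (T pY)) pX))"
      using kext_hom[OF e1] .
    have "cmp B (kl B ihom ev T kext sigma pX pY) (tensm B t' (idt B (T pX)))
        = cmp B (cmp B (kext (ev pX (T pY))) (sigma (ihom pX (T pY)) pX)) (tensm B t' (idt B (T pX)))"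
      unfolding kl_def ..
    also have "\<dots> = cmp B (kext (ev pX (T pY))) (cmp B (sigma (ihom pX (T pY)) pX) (tensm B t' (idt B (T pX))))"
      using cat_assoc[OF cB tt sig1 kev] by simp
    also have "\<dots> = cmp B (kext (ev pX (T pY))) (cmp B (kext (cmp B (eta (tens B (ihom pX (T pY)) pX)) (tensm B t' (idt B pX)))) (sigma pZ pX))"
      using sigma_nat[OF t' pX] by simp
    also have "\<dots> = cmp B (cmp B (kext (ev pX (T pY))) (kext (cmp B (eta (tens B (ihom pX (T pY)) pX)) (tensm B t' (idt B pX))))) (sigma pZ pX)"
      using cat_assoc[OF cB sig0 ke1 kev] .
    also have "\<dots> = cmp B (kext (cmp B (kext (ev pX (T pY))) (cmp B (eta (tens B (ihom pX (T pY)) pX)) (tensm B t' (idt B pX))))) (sigma pZ pX)"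
      using kext_comp[OF e1 evh] by simp
    also have "\<dots> = cmp B (kext (cmp B (cmp B (kext (ev pX (T pY))) (eta (tens B (ihom pX (T pY)) pX))) (tensm B t' (idt B pX)))) (sigma pZ pX)"
      using cat_assoc[OF cB tX etah kev] by simp
    also have "\<dots> = cmp B (kext f) (sigma pZ pX)"
      using kext_eta[OF evh] tev by simp
    finally have "pm (cmp E k (tensm E t (idt E W))) = cmp B (kext f) (sigma (po Z) (po X))"
      using pc pX_def pZ_def by simp
    then show ?thesis using comp unfolding lifts_def W_def pX_def pY_def by blast
  qed
  show ?thesis unfolding BLift_def using ob mono main by blast
qed

lemma main: "preorder_equiv
           (BLift B E po pm Lo T kext sigma le mult) (blift_le B E po pm T)
           (Asign B ihom ev E po pm pitch T kext sigma le mult) (asign_le B E pm T)"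
  unfolding preorder_equiv_def
proof (intro exI[of _ "\<lambda>Td a X. Td a (Lo X)"] exI[of _ "\<lambda>D a Y. D a (po Y)"] conjI ballI impI)
  fix Td assume "Td \<in> BLift B E po pm Lo T kext sigma le mult"
  then show "(\<lambda>a X. Td a (Lo X)) \<in> Asign B ihom ev E po pm pitch T kext sigma le mult"
    by (rule phi_mem)
next
  fix D assume "D \<in> Asign B ihom ev E po pm pitch T kext sigma le mult"
  then show "(\<lambda>a Y. D a (po Y)) \<in> BLift B E po pm Lo T kext sigma le mult"
    by (rule psi_mem)
next
  fix Td Td' assume "blift_le B E po pm T Td Td'"
  then show "asign_le B E pm T (\<lambda>a X. Td a (Lo X)) (\<lambda>a X. Td' a (Lo X))"
    unfolding blift_le_def asign_le_def ord_le_def using Lo_ob po_Lo by fastforce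
next
  fix D D' assume "asign_le B E pm T D D'"
  then show "blift_le B E po pm T (\<lambda>a Y. D a (po Y)) (\<lambda>a Y. D' a (po Y))"
    unfolding blift_le_def asign_le_def ord_le_def using po_ob by fastforce
next
  fix Td assume Td: "Td \<in> BLift B E po pm Lo T kext sigma le mult"
  show "blift_le B E po pm T (\<lambda>a Y. Td a (Lo (po Y))) Td"
    unfolding blift_le_def ord_le_def
  proof (intro allI ballI)
    fix a Y assume Y: "Y \<in> Ob E"
    have "lifts E pm (Td a (Lo (po Y))) (Td a Y) (idt B (T (po (Lo (po Y)))))"
      using blift_inv[OF Td Lo_ob[OF po_ob[OF Y]] Y] po_Lo[OF po_ob[OF Y]] by simp
    then show "lifts E pm (Td a (Lo (po Y))) (Td a Y) (idt B (T (po Y)))"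
      using po_Lo[OF po_ob[OF Y]] by simp
  qed
  show "blift_le B E po pm T Td (\<lambda>a Y. Td a (Lo (po Y)))"
    unfolding blift_le_def ord_le_def
  proof (intro allI ballI)
    fix a Y assume Y: "Y \<in> Ob E"
    show "lifts E pm (Td a Y) (Td a (Lo (po Y))) (idt B (T (po Y)))"
      using blift_inv[OF Td Y Lo_ob[OF po_ob[OF Y]]] po_Lo[OF po_ob[OF Y]] by simp
  qed
next
  fix D assume D: "D \<in> Asign B ihom ev E po pm pitch T kext sigma le mult"
  have refl: "lifts E pm (D a X) (D a X) (idt B (T X))" if X: "X \<in> Ob B" for a X
    unfolding lifts_def using cat_id[OF cE conjunct1[OF asign_ob[OF D X]]] pm_id[OF conjunct1[OF asign_ob[OF D X]]]
      asign_ob[OF D X] by auto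
  show "asign_le B E pm T (\<lambda>a X. D a (po (Lo X))) D"
    unfolding asign_le_def ord_le_def using refl po_Lo by simp
  show "asign_le B E pm T D (\<lambda>a X. D a (po (Lo X)))"
    unfolding asign_le_def ord_le_def using refl po_Lo by simp
qed

end

theorem theorem3:
  fixes B :: "('bo,'bm) mcat" and ihom :: "'bo \<Rightarrow> 'bo \<Rightarrow> 'bo" and ev :: "'bo \<Rightarrow> 'bo \<Rightarrow> 'bm"
    and E :: "('eo,'em) mcat" and po :: "'eo \<Rightarrow> 'bo" and pm :: "'em \<Rightarrow> 'bm"
    and Lo :: "'bo \<Rightarrow> 'eo" and Lm :: "'bm \<Rightarrow> 'em"
    and pitch :: "'bo \<Rightarrow> 'eo \<Rightarrow> 'eo" and evE :: "'bo \<Rightarrow> 'eo \<Rightarrow> 'em"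
    and T :: "'bo \<Rightarrow> 'bo" and eta :: "'bo \<Rightarrow> 'bm" and kext :: "'bm \<Rightarrow> 'bm"
    and sigma :: "'bo \<Rightarrow> 'bo \<Rightarrow> 'bm"
    and le :: "'g \<Rightarrow> 'g \<Rightarrow> bool" and one :: 'g and mult :: "'g \<Rightarrow> 'g \<Rightarrow> 'g"
  assumes "wc_refinement B ihom ev E po pm Lo Lm pitch evE"
    and "strong_monad B T eta kext sigma"
    and "preordered_monoid le one mult"
  shows "preorder_equiv
           (BLift B E po pm Lo T kext sigma le mult) (blift_le B E po pm T)
           (Asign B ihom ev E po pm pitch T kext sigma le mult) (asign_le B E pm T)"
  by (rule thm3.main) (unfold_locales; fact assms)

end
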